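(* Let $d\in\mathbb{N}$ and suppose that $\mu_s(T_n)=\frac{s}{2}$ holds for every $n\le d$ and every $s\in\{1,\dots,n\}$. Then for every terminal $d$-polytope $T\subseteq\mathbb{R}^d$ and every $i\in\{1,\dots,d\}$, $\mu_i(T)=\frac{i}{2}$.
   Context: All covering minima are with respect to the integer lattice: for a convex body $K\subseteq\mathbb{R}^n$ and $i\in\{1,\dots,n\}$, $\mu_i(K)=\min\{\mu\ge0:(\mu K+\mathbb{Z}^n)\cap U\ne\emptyset$ for every $(n-i)$-dimensional affine subspace $U\subseteq\mathbb{R}^n\}$; covering minima are invariant under translations by $\mathbb{R}^n$. The standard terminal simplex is $T_n=\operatorname{conv}(-\mathbb{1}_n,e_1,\dots,e_n)\subseteq\mathbb{R}^n$. For sets $K\subseteq V$, $L\subseteq W$ containing the origin, with $\mathbb{R}^d=V\oplus W$, the direct sum is $K\oplus L=\{\lambda x+(1-\lambda)y:x\in K,y\in L,\lambda\in[0,1]\}$. A terminal $d$-polytope is a full-dimensional lattice polytope of the form $(u_1+T_{l_1})\oplus\cdots\oplus(u_k+T_{l_k})$ with respect to the coordinate decomposition $\mathbb{R}^d=\mathbb{R}^{l_1}\oplus\cdots\oplus\mathbb{R}^{l_k}$, $l_1+\dots+l_k=d$, where each translate $u_j+T_{l_j}$ ($u_j\in\mathbb{Z}^{l_j}$) contains the origin. *)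

theory Defs
  imports "HOL-Analysis.Analysis"
begin

text \<open>Points of R^n are represented as functions nat => real vanishing at all
  coordinates j >= n (coordinates are indexed 0..n-1).\<close>

definition Rn :: "nat \<Rightarrow> (nat \<Rightarrow> real) set" where
  "Rn n = {x. \<forall>j\<ge>n. x j = 0}"

definition Zn :: "nat \<Rightarrow> (nat \<Rightarrow> real) set" where
  "Zn n = {z. z \<in> Rn n \<and> (\<forall>j<n. z j \<in> \<int>)}"

definition affsub :: "nat \<Rightarrow> nat \<Rightarrow> (nat \<Rightarrow> real) set \<Rightarrow> bool" where
  "affsub n k U \<longleftrightarrow> (\<exists>a v. a \<in> Rn n \<and> (\<forall>l<k. v l \<in> Rn n) \<and>
     (\<forall>c. (\<lambda>j. \<Sum>l<k. c l * v l j) = (\<lambda>j. 0) \<longrightarrow> (\<forall>l<k. c l = 0)) \<and>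
     U = {(\<lambda>j. a j + (\<Sum>l<k. t l * v l j)) | t. True})"

definition covmin :: "nat \<Rightarrow> nat \<Rightarrow> (nat \<Rightarrow> real) set \<Rightarrow> real" where
  "covmin n i K = Inf {\<mu>::real. \<mu> \<ge> 0 \<and>
     (\<forall>U. affsub n (n - i) U \<longrightarrow> (\<exists>x\<in>K. \<exists>z\<in>Zn n. (\<lambda>j. \<mu> * x j + z j) \<in> U))}"

definition tsvert :: "nat \<Rightarrow> nat \<Rightarrow> (nat \<Rightarrow> real)" where
  "tsvert n l = (if l < n then (\<lambda>j. if j = l then 1 else 0)
                 else (\<lambda>j. if j < n then -1 else 0))"

definition tsimplex :: "nat \<Rightarrow> (nat \<Rightarrow> real) set" where
  "tsimplex n = {(\<lambda>j. \<Sum>l\<le>n. c l * tsvert n l j) | c.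
                   (\<forall>l\<le>n. c l \<ge> 0) \<and> (\<Sum>l\<le>n. c l) = 1}"

definition transl :: "(nat \<Rightarrow> real) \<Rightarrow> (nat \<Rightarrow> real) set \<Rightarrow> (nat \<Rightarrow> real) set" where
  "transl u K = {(\<lambda>j. u j + x j) | x. x \<in> K}"

definition shift :: "nat \<Rightarrow> (nat \<Rightarrow> real) set \<Rightarrow> (nat \<Rightarrow> real) set" where
  "shift off K = {(\<lambda>j. if off \<le> j then x (j - off) else 0) | x. x \<in> K}"

definition dsum :: "(nat \<Rightarrow> real) set \<Rightarrow> (nat \<Rightarrow> real) set \<Rightarrow> (nat \<Rightarrow> real) set" where
  "dsum K L = {(\<lambda>j. t * x j + (1 - t) * y j) | t x y. t \<in> {0..1} \<and> x \<in> K \<and> y \<in> L}"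

text \<open>(u_1 + T_{l_1}) \<oplus> ... \<oplus> (u_k + T_{l_k}), the j-th block occupying the
  consecutive coordinates after the previous blocks; the second argument is
  the coordinate offset of the first block.\<close>
fun tsum :: "(nat \<times> (nat \<Rightarrow> real)) list \<Rightarrow> nat \<Rightarrow> (nat \<Rightarrow> real) set" where
  "tsum [] off = {(\<lambda>j. 0)}"
| "tsum [(l, u)] off = shift off (transl u (tsimplex l))"
| "tsum ((l, u) # b # bs) off = dsum (shift off (transl u (tsimplex l))) (tsum (b # bs) (off + l))"

definition terminal_polytope :: "nat \<Rightarrow> (nat \<Rightarrow> real) set \<Rightarrow> bool" where
  "terminal_polytope d T \<longleftrightarrow> (\<exists>bs. bs \<noteq> [] \<and>
     (\<forall>(l, u) \<in> set bs. l \<ge> 1 \<and> u \<in> Zn l \<and> (\<lambda>j. 0) \<in> transl u (tsimplex l)) \<and>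
     sum_list (map fst bs) = d \<and> T = tsum bs 0)"

end

theory Submission
  imports Defs "HOL-Library.Function_Algebras"
begin


definition sc :: "real \<Rightarrow> (nat \<Rightarrow> real) \<Rightarrow> (nat \<Rightarrow> real)" where
  "sc r x = (\<lambda>j. r * x j)"

interpretation fvs: vector_space sc
  by unfold_locales (auto simp: sc_def fun_eq_iff algebra_simps)

lemma sum_fun_app: "(sum f A) j = sum (\<lambda>a. f a j) A"
  by (induction A rule: infinite_finite_induct) auto

definition lincomb :: "nat \<Rightarrow> (nat \<Rightarrow> real) \<Rightarrow> (nat \<Rightarrow> nat \<Rightarrow> real) \<Rightarrow> (nat \<Rightarrow> real)" where
  "lincomb k c v = (\<lambda>j. \<Sum>l<k. c l * v l j)"

definition indep :: "nat \<Rightarrow> (nat \<Rightarrow> nat \<Rightarrow> real) \<Rightarrow> bool" where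
  "indep k v \<longleftrightarrow> (\<forall>c. lincomb k c v = (\<lambda>j. 0) \<longrightarrow> (\<forall>l<k. c l = 0))"

lemma indep_inj: assumes "indep k v" shows "inj_on v {..<k}"
proof (rule inj_onI, rule ccontr)
  fix a b assume ab: "a \<in> {..<k}" "b \<in> {..<k}" "v a = v b" "a \<noteq> b"
  define c where "c = (\<lambda>l. if l = a then (1::real) else if l = b then -1 else 0)"
  have "lincomb k c v = (\<lambda>j. 0)"
  proof
    fix j
    have "(\<Sum>l<k. c l * v l j) = (\<Sum>l\<in>{a,b}. c l * v l j)"
      by (rule sum.mono_neutral_right) (use ab in \<open>auto simp: c_def\<close>)
    also have "\<dots> = 0" using ab by (simp add: c_def)
    finally show "lincomb k c v j = 0" by (simp add: lincomb_def)
  qed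
  then have "c a = 0" using assms ab unfolding indep_def by auto
  then show False by (simp add: c_def)
qed

lemma indep_independent: assumes "indep k v" shows "fvs.independent (v ` {..<k})"
proof
  assume "fvs.dependent (v ` {..<k})"
  then obtain u where u: "\<exists>x\<in>v ` {..<k}. u x \<noteq> 0" "(\<Sum>x\<in>v ` {..<k}. sc (u x) x) = 0"
    using fvs.dependent_finite by blast
  have inj: "inj_on v {..<k}" using indep_inj[OF assms] .
  have "lincomb k (\<lambda>l. u (v l)) v = (\<lambda>j. 0)"
  proof
    fix j
    have "0 = (\<Sum>x\<in>v ` {..<k}. sc (u x) x) j" using u(2) by simp
    also have "\<dots> = (\<Sum>x\<in>v ` {..<k}. u x * x j)" by (simp add: sum_fun_app sc_def)
    also have "\<dots> = (\<Sum>l<k. u (v l) * v l j)" by (simp add: sum.reindex[OF inj])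
    finally show "lincomb k (\<lambda>l. u (v l)) v j = 0" by (simp add: lincomb_def)
  qed
  then have "\<forall>l<k. u (v l) = 0" using assms unfolding indep_def by blast
  then show False using u(1) by auto
qed

definition unitv :: "nat \<Rightarrow> nat \<Rightarrow> real" where
  "unitv l = (\<lambda>j. if j = l then 1 else 0)"

lemma Rn_span: assumes "x \<in> Rn n" shows "x \<in> fvs.span (unitv ` {..<n})"
proof -
  have "x = (\<Sum>l<n. sc (x l) (unitv l))"
  proof
    fix j
    show "x j = (\<Sum>l<n. sc (x l) (unitv l)) j"
    proof (cases "j < n")
      case True
      have "(\<Sum>l<n. sc (x l) (unitv l)) j = (\<Sum>l<n. if l = j then x j else 0)"
        unfolding sum_fun_app sc_def unitv_def by (intro sum.cong) auto
      also have "\<dots> = x j" using True by simp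
      finally show ?thesis by simp
    next
      case False
      then have "x j = 0" using assms by (simp add: Rn_def)
      moreover have "(\<Sum>l<n. sc (x l) (unitv l)) j = 0" using False
        by (simp add: sum_fun_app sc_def unitv_def)
      ultimately show ?thesis by simp
    qed
  qed
  also have "\<dots> \<in> fvs.span (unitv ` {..<n})"
    by (intro fvs.span_sum fvs.span_scale fvs.span_base) auto
  finally show ?thesis .
qed

lemma indep_bound: assumes "indep k v" "\<forall>l<k. v l \<in> Rn n" shows "k \<le> n"
proof -
  have "v ` {..<k} \<subseteq> fvs.span (unitv ` {..<n})" using assms(2) Rn_span by auto
  then have "card (v ` {..<k}) \<le> card (unitv ` {..<n})"
    using fvs.independent_span_bound[OF finite_imageI[OF finite_lessThan] indep_independent[OF assms(1)]] by blast
  also have "\<dots> \<le> n" using card_image_le[of "{..<n}" unitv] by simp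
  finally show ?thesis using card_image[OF indep_inj[OF assms(1)]] by simp
qed

lemma indep_span: assumes "indep n v" "\<forall>l<n. v l \<in> Rn n" "x \<in> Rn n"
  shows "\<exists>c. x = lincomb n c v"
proof -
  let ?B = "v ` {..<n}"
  have xs: "x \<in> fvs.span ?B"
  proof (rule ccontr)
    assume "x \<notin> fvs.span ?B"
    then have ind: "fvs.independent (insert x ?B)"
      using fvs.independent_insertI indep_independent[OF assms(1)] by blast
    have "insert x ?B \<subseteq> fvs.span (unitv ` {..<n})" using assms(2,3) Rn_span by auto
    then have "card (insert x ?B) \<le> card (unitv ` {..<n})"
      using fvs.independent_span_bound[OF finite_imageI[OF finite_lessThan] ind] by blast
    also have "\<dots> \<le> n" using card_image_le[of "{..<n}" unitv] by simp
    finally have "card (insert x ?B) \<le> n" .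
    moreover have "x \<notin> ?B" using \<open>x \<notin> fvs.span ?B\<close> fvs.span_base[of x ?B] by blast
    moreover have "card ?B = n" using card_image[OF indep_inj[OF assms(1)]] by simp
    ultimately show False by simp
  qed
  have "fvs.span ?B = range (\<lambda>u. \<Sum>y\<in>?B. sc (u y) y)" by (rule fvs.span_finite) simp
  then obtain u where u: "x = (\<Sum>y\<in>?B. sc (u y) y)" using xs by blast
  have "x = lincomb n (\<lambda>l. u (v l)) v"
  proof
    fix j
    have "x j = (\<Sum>y\<in>?B. u y * y j)" using u by (simp add: sum_fun_app sc_def)
    also have "\<dots> = (\<Sum>l<n. u (v l) * v l j)" by (simp add: sum.reindex[OF indep_inj[OF assms(1)]])
    finally show "x j = lincomb n (\<lambda>l. u (v l)) v j" by (simp add: lincomb_def)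
  qed
  then show ?thesis by blast
qed



definition pK :: "nat \<Rightarrow> (nat \<Rightarrow> real) \<Rightarrow> (nat \<Rightarrow> real)" where
  "pK n x = (\<lambda>j. if j < n then x j else 0)"

definition jind :: "nat \<Rightarrow> (nat \<Rightarrow> nat \<Rightarrow> real) \<Rightarrow> nat \<Rightarrow> (nat \<Rightarrow> nat \<Rightarrow> real) \<Rightarrow> bool" where
  "jind k1 w k2 y \<longleftrightarrow> (\<forall>c1 c2. (\<lambda>j. lincomb k1 c1 w j + lincomb k2 c2 y j) = (\<lambda>j. 0)
      \<longrightarrow> (\<forall>l<k1. c1 l = 0) \<and> (\<forall>l<k2. c2 l = 0))"

lemma lincomb_Suc: "lincomb (Suc k) c v j = lincomb k c v j + c k * v k j"
  by (simp add: lincomb_def)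

lemma lincomb_cong: "(\<And>l. l < k \<Longrightarrow> c l = c' l) \<Longrightarrow> (\<And>l. l < k \<Longrightarrow> v l = v' l) \<Longrightarrow>
   lincomb k c v = lincomb k c' v'"
  unfolding lincomb_def by (intro ext sum.cong) auto

lemma lincomb_lin: "lincomb k (\<lambda>l. a * c l + b * d l) v j = a * lincomb k c v j + b * lincomb k d v j"
  by (simp add: lincomb_def sum.distrib sum_distrib_left algebra_simps)

lemma lincomb_scale: "lincomb k (\<lambda>l. a * c l) v j = a * lincomb k c v j"
  by (simp add: lincomb_def sum_distrib_left algebra_simps)

lemma lincomb_zero: "lincomb k (\<lambda>l. 0) v = (\<lambda>j. 0)"
  by (simp add: lincomb_def)

lemma lincomb_0: "lincomb 0 c v = (\<lambda>j. 0)"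
  by (simp add: lincomb_def)

lemma indep_Suc: assumes "indep (Suc k) v" shows "indep k v"
  unfolding indep_def
proof (intro allI impI)
  fix c l assume h: "lincomb k c v = (\<lambda>j. 0)" and l: "l < k"
  have "lincomb (Suc k) (c(k := 0)) v = lincomb k (c(k:=0)) v"
    by (simp add: fun_eq_iff lincomb_Suc)
  also have "\<dots> = lincomb k c v" by (rule lincomb_cong) auto
  finally have "(c(k:=0)) l = 0" using assms h l unfolding indep_def by (metis less_SucI)
  then show "c l = 0" using l by simp
qed

lemma indep_notin: assumes "indep (Suc k) v" shows "v k \<noteq> lincomb k c v"
proof
  assume h: "v k = lincomb k c v"
  have "lincomb (Suc k) (c(k := -1)) v = (\<lambda>j. 0)"
  proof
    fix j
    have "lincomb (Suc k) (c(k := -1)) v j = lincomb k (c(k := -1)) v j - v k j"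
      by (simp add: lincomb_Suc)
    moreover have "lincomb k (c(k := -1)) v = lincomb k c v" by (rule lincomb_cong) auto
    ultimately have "lincomb (Suc k) (c(k := -1)) v j = lincomb k c v j - v k j" by simp
    then show "lincomb (Suc k) (c(k := -1)) v j = 0" using h by simp
  qed
  then have "(c(k := -1)) k = 0" using assms unfolding indep_def by blast
  then show False by simp
qed

lemma h1: fixes g A B V W :: real assumes "A + B + g * (V - W) = 0" "g \<noteq> 0"
  shows "V = 1 * W + (-1/g) * A + (-1/g) * B"
proof -
  have "g * (V - W) = -(A+B)" using assms(1) by linarith
  then have "V - W = -(A+B)/g" using assms(2) by (simp add: eq_divide_eq mult.commute)
  moreover have "(-1/g) * A + (-1/g) * B = -(A+B)/g" by (simp add: diff_divide_distrib)
  ultimately show ?thesis by linarith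
qed
lemma h2: fixes g A B V :: real assumes "A + g * V + B = 0" "g \<noteq> 0"
  shows "V = (-1/g) * A + (-1/g) * B"
proof -
  have "g * V = -(A+B)" using assms(1) by linarith
  then have "V = -(A+B)/g" using assms(2) by (simp add: eq_divide_eq mult.commute)
  then show ?thesis using assms(2) by (simp add: field_simps)
qed
lemma h3: fixes g L P :: real assumes "L + g * P = 0" "g \<noteq> 0"
  shows "P = (-1/g) * L"
proof -
  have "g * P = -L" using assms(1) by linarith
  then show ?thesis using assms(2) by (simp add: field_simps)
qed

lemma split_lemma:
  assumes "indep k v"
  shows "\<exists>k1 k2 w y. k1 + k2 = k \<and> (\<forall>l<k2. \<forall>j<n. y l j = 0) \<and> indep k1 (\<lambda>l. pK n (w l))
    \<and> jind k1 w k2 y \<and> (\<forall>c1 c2. \<exists>c. (\<lambda>j. lincomb k1 c1 w j + lincomb k2 c2 y j) = lincomb k c v)"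
  using assms
proof (induction k)
  case 0
  show ?case
    by (rule exI[of _ 0], rule exI[of _ 0]) (auto simp: indep_def jind_def lincomb_0)
next
  case (Suc k)
  from Suc.IH[OF indep_Suc[OF Suc.prems]] obtain k1 k2 w y where
    kk: "k1 + k2 = k" and yz: "\<forall>l<k2. \<forall>j<n. y l j = 0" and iw: "indep k1 (\<lambda>l. pK n (w l))"
    and jw: "jind k1 w k2 y"
    and sp: "\<forall>c1 c2. \<exists>c. (\<lambda>j. lincomb k1 c1 w j + lincomb k2 c2 y j) = lincomb k c v" by blast
  have notin: "v k \<noteq> (\<lambda>j. lincomb k1 c1 w j + lincomb k2 c2 y j)" for c1 c2
    using sp indep_notin[OF Suc.prems] by metis
  have spS: "\<exists>c. (\<lambda>j. lincomb k1 c1 w j + lincomb k2 c2 y j + g * v k j) = lincomb (Suc k) c v" for c1 c2 g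
  proof -
    obtain c where c: "(\<lambda>j. lincomb k1 c1 w j + lincomb k2 c2 y j) = lincomb k c v" using sp by blast
    have "lincomb k (c(k := g)) v = lincomb k c v" by (rule lincomb_cong) auto
    then have "(\<lambda>j. lincomb k1 c1 w j + lincomb k2 c2 y j + g * v k j) = lincomb (Suc k) (c(k := g)) v"
      using c by (simp add: fun_eq_iff lincomb_Suc)
    then show ?thesis by blast
  qed
  show ?case
  proof (cases "\<exists>\<alpha>. pK n (v k) = lincomb k1 \<alpha> (\<lambda>l. pK n (w l))")
    case True
    then obtain \<alpha> where \<alpha>: "pK n (v k) = lincomb k1 \<alpha> (\<lambda>l. pK n (w l))" by blast
    define y' where "y' = y(k2 := (\<lambda>j. v k j - lincomb k1 \<alpha> w j))"
    have ly': "lincomb (Suc k2) c2 y' j = lincomb k2 c2 y j + c2 k2 * (v k j - lincomb k1 \<alpha> w j)" for c2 j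
    proof -
      have "lincomb k2 c2 y' = lincomb k2 c2 y" by (rule lincomb_cong) (auto simp: y'_def)
      then show ?thesis by (simp add: lincomb_Suc y'_def)
    qed
    have "k1 + Suc k2 = Suc k" using kk by simp
    moreover have "\<forall>l<Suc k2. \<forall>j<n. y' l j = 0"
    proof (intro allI impI)
      fix l j assume l: "l < Suc k2" and j: "j < n"
      show "y' l j = 0"
      proof (cases "l = k2")
        case True
        have "v k j = lincomb k1 \<alpha> (\<lambda>l. pK n (w l)) j" using \<alpha> j by (metis pK_def)
        also have "\<dots> = lincomb k1 \<alpha> w j" using j by (simp add: lincomb_def pK_def)
        finally show ?thesis using True by (simp add: y'_def)
      next
        case False
        then show ?thesis using l j yz by (simp add: y'_def)
      qed
    qed
    moreover have "jind k1 w (Suc k2) y'"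
      unfolding jind_def
    proof (intro allI impI)
      fix c1 c2 assume h: "(\<lambda>j. lincomb k1 c1 w j + lincomb (Suc k2) c2 y' j) = (\<lambda>j. 0)"
      have g0: "c2 k2 = 0"
      proof (rule ccontr)
        assume g: "c2 k2 \<noteq> 0"
        let ?g = "c2 k2"
        have "v k = (\<lambda>j. lincomb k1 (\<lambda>l. 1 * \<alpha> l + (-1/?g) * c1 l) w j + lincomb k2 (\<lambda>l. (-1/?g) * c2 l) y j)"
        proof
          fix j
          have "lincomb k1 c1 w j + lincomb k2 c2 y j + ?g * (v k j - lincomb k1 \<alpha> w j) = 0"
            using h ly' by (metis (no_types, lifting) add.assoc)
          then show "v k j = lincomb k1 (\<lambda>l. 1 * \<alpha> l + (-1/?g) * c1 l) w j + lincomb k2 (\<lambda>l. (-1/?g) * c2 l) y j"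
            unfolding lincomb_lin lincomb_scale using h1[OF _ g] by simp
        qed
        then show False using notin by blast
      qed
      have "(\<lambda>j. lincomb k1 c1 w j + lincomb k2 c2 y j) = (\<lambda>j. 0)"
        using h by (simp add: ly' g0 fun_eq_iff)
      then have "(\<forall>l<k1. c1 l = 0) \<and> (\<forall>l<k2. c2 l = 0)" using jw unfolding jind_def by blast
      then show "(\<forall>l<k1. c1 l = 0) \<and> (\<forall>l<Suc k2. c2 l = 0)" using g0 less_Suc_eq by auto
    qed
    moreover have "\<forall>c1 c2. \<exists>c. (\<lambda>j. lincomb k1 c1 w j + lincomb (Suc k2) c2 y' j) = lincomb (Suc k) c v"
    proof (intro allI)
      fix c1 c2
      obtain c where c: "(\<lambda>j. lincomb k1 (\<lambda>l. 1 * c1 l + (- c2 k2) * \<alpha> l) w j + lincomb k2 c2 y j + c2 k2 * v k j) = lincomb (Suc k) c v"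
        using spS by blast
      have "(\<lambda>j. lincomb k1 c1 w j + lincomb (Suc k2) c2 y' j) = lincomb (Suc k) c v"
        unfolding c[symmetric] ly' lincomb_lin by (simp add: algebra_simps)
      then show "\<exists>c. (\<lambda>j. lincomb k1 c1 w j + lincomb (Suc k2) c2 y' j) = lincomb (Suc k) c v" by blast
    qed
    ultimately show ?thesis using iw by blast
  next
    case False
    define w' where "w' = w(k1 := v k)"
    have lw': "lincomb (Suc k1) c1 w' j = lincomb k1 c1 w j + c1 k1 * v k j" for c1 j
    proof -
      have "lincomb k1 c1 w' = lincomb k1 c1 w" by (rule lincomb_cong) (auto simp: w'_def)
      then show ?thesis by (simp add: lincomb_Suc w'_def)
    qed
    have "Suc k1 + k2 = Suc k" using kk by simp
    moreover have "indep (Suc k1) (\<lambda>l. pK n (w' l))"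
      unfolding indep_def
    proof (intro allI impI)
      fix c l assume h: "lincomb (Suc k1) c (\<lambda>l. pK n (w' l)) = (\<lambda>j. 0)" and l: "l < Suc k1"
      have hh: "lincomb k1 c (\<lambda>l. pK n (w l)) j + c k1 * pK n (v k) j = 0" for j
      proof -
        have "lincomb k1 c (\<lambda>l. pK n (w' l)) = lincomb k1 c (\<lambda>l. pK n (w l))"
          by (rule lincomb_cong) (auto simp: w'_def)
        then show ?thesis using h by (metis lincomb_Suc fun_upd_same w'_def)
      qed
      have g0: "c k1 = 0"
      proof (rule ccontr)
        assume g: "c k1 \<noteq> 0"
        have "pK n (v k) = lincomb k1 (\<lambda>l. (-1 / c k1) * c l) (\<lambda>l. pK n (w l))"
        proof
          fix j
          show "pK n (v k) j = lincomb k1 (\<lambda>l. (-1 / c k1) * c l) (\<lambda>l. pK n (w l)) j"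
            unfolding lincomb_scale using h3[OF hh[of j] g] by simp
        qed
        then show False using False by blast
      qed
      have "lincomb k1 c (\<lambda>l. pK n (w l)) = (\<lambda>j. 0)" using hh g0 by (simp add: fun_eq_iff)
      then have "\<forall>l<k1. c l = 0" using iw unfolding indep_def by blast
      then show "c l = 0" using g0 l less_Suc_eq by auto
    qed
    moreover have "jind (Suc k1) w' k2 y"
      unfolding jind_def
    proof (intro allI impI)
      fix c1 c2 assume h: "(\<lambda>j. lincomb (Suc k1) c1 w' j + lincomb k2 c2 y j) = (\<lambda>j. 0)"
      have g0: "c1 k1 = 0"
      proof (rule ccontr)
        assume g: "c1 k1 \<noteq> 0"
        have "v k = (\<lambda>j. lincomb k1 (\<lambda>l. (-1/c1 k1) * c1 l) w j + lincomb k2 (\<lambda>l. (-1/c1 k1) * c2 l) y j)"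
        proof
          fix j
          have "lincomb k1 c1 w j + c1 k1 * v k j + lincomb k2 c2 y j = 0"
            using h lw' by metis
          then show "v k j = lincomb k1 (\<lambda>l. (-1/c1 k1) * c1 l) w j + lincomb k2 (\<lambda>l. (-1/c1 k1) * c2 l) y j"
            unfolding lincomb_scale using h2[OF _ g] by simp
        qed
        then show False using notin by blast
      qed
      have "(\<lambda>j. lincomb k1 c1 w j + lincomb k2 c2 y j) = (\<lambda>j. 0)"
        using h by (simp add: lw' g0 fun_eq_iff)
      then have "(\<forall>l<k1. c1 l = 0) \<and> (\<forall>l<k2. c2 l = 0)" using jw unfolding jind_def by blast
      then show "(\<forall>l<Suc k1. c1 l = 0) \<and> (\<forall>l<k2. c2 l = 0)" using g0 less_Suc_eq by auto
    qed
    moreover have "\<forall>c1 c2. \<exists>c. (\<lambda>j. lincomb (Suc k1) c1 w' j + lincomb k2 c2 y j) = lincomb (Suc k) c v"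
    proof (intro allI)
      fix c1 c2
      obtain c where c: "(\<lambda>j. lincomb k1 c1 w j + lincomb k2 c2 y j + c1 k1 * v k j) = lincomb (Suc k) c v"
        using spS by blast
      have "(\<lambda>j. lincomb (Suc k1) c1 w' j + lincomb k2 c2 y j) = lincomb (Suc k) c v"
        unfolding c[symmetric] lw' by (simp add: algebra_simps)
      then show "\<exists>c. (\<lambda>j. lincomb (Suc k1) c1 w' j + lincomb k2 c2 y j) = lincomb (Suc k) c v" by blast
    qed
    moreover have "\<forall>l<k2. \<forall>j<n. y l j = 0" using yz .
    ultimately show ?thesis by blast
  qed
qed



definition hits :: "nat \<Rightarrow> real \<Rightarrow> (nat \<Rightarrow> real) set \<Rightarrow> (nat \<Rightarrow> real) set \<Rightarrow> bool" where
  "hits n \<mu> K U \<longleftrightarrow> (\<exists>x\<in>K. \<exists>z\<in>Zn n. (\<lambda>j. \<mu> * x j + z j) \<in> U)"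

definition star0 :: "(nat \<Rightarrow> real) set \<Rightarrow> bool" where
  "star0 K \<longleftrightarrow> (\<lambda>j. 0) \<in> K \<and> (\<forall>x\<in>K. \<forall>t. 0 \<le> t \<and> t \<le> 1 \<longrightarrow> (\<lambda>j. t * x j) \<in> K)"

definition good :: "nat \<Rightarrow> (nat \<Rightarrow> real) set \<Rightarrow> bool" where
  "good n K \<longleftrightarrow> K \<subseteq> Rn n \<and> star0 K \<and>
    (\<forall>s\<le>n. \<forall>r. real s / 2 < r \<longrightarrow> (\<forall>U. affsub n (n - s) U \<longrightarrow> hits n r K U)) \<and>
    (\<forall>s\<le>n. \<forall>r. r < real s / 2 \<longrightarrow> (\<exists>U. affsub n (n - s) U \<and> (\<forall>\<mu>. 0 \<le> \<mu> \<and> \<mu> \<le> r \<longrightarrow> \<not> hits n \<mu> K U)))"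

lemma affsub_indep: "(\<forall>c. (\<lambda>j. \<Sum>l<k. c l * v l j) = (\<lambda>j. 0) \<longrightarrow> (\<forall>l<k. c l = 0)) \<longleftrightarrow> indep k v"
  by (simp add: indep_def lincomb_def)

lemma affsub_exists: assumes "k \<le> n" shows "\<exists>U. affsub n k U"
proof -
  have "indep k unitv"
    unfolding indep_def
  proof (intro allI impI)
    fix c l assume h: "lincomb k c unitv = (\<lambda>j. 0)" and l: "l < k"
    have "lincomb k c unitv l = (\<Sum>i<k. if i = l then c i else 0)"
      unfolding lincomb_def unitv_def by (intro sum.cong) auto
    also have "\<dots> = c l" using l by simp
    finally show "c l = 0" using h by (metis)
  qed
  moreover have "\<forall>l<k. unitv l \<in> Rn n" using assms by (auto simp: unitv_def Rn_def)
  moreover have "(\<lambda>j. 0) \<in> Rn n" by (simp add: Rn_def)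
  ultimately show ?thesis unfolding affsub_def affsub_indep by blast
qed

lemma hits_mono: assumes "star0 K" "0 \<le> \<mu>" "\<mu> \<le> r" "hits n \<mu> K U" shows "hits n r K U"
proof (cases "\<mu> = r")
  case True then show ?thesis using assms by simp
next
  case False
  then have lp: "r > 0" using assms by simp
  obtain x z where x: "x \<in> K" "z \<in> Zn n" "(\<lambda>j. \<mu> * x j + z j) \<in> U" using assms(4) unfolding hits_def by blast
  have t: "0 \<le> \<mu>/r \<and> \<mu>/r \<le> 1" using lp assms(2,3) by simp
  have "(\<lambda>j. (\<mu>/r) * x j) \<in> K" using assms(1) x(1) t unfolding star0_def by blast
  moreover have "(\<lambda>j. r * ((\<mu>/r) * x j) + z j) = (\<lambda>j. \<mu> * x j + z j)" using lp by simp
  ultimately show ?thesis using x unfolding hits_def by metis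
qed

lemma lincomb_Rn: "(\<forall>l<k. v l \<in> Rn N) \<Longrightarrow> lincomb k c v \<in> Rn N"
  by (simp add: lincomb_def Rn_def)

lemma upper0: assumes "affsub n n U" "(\<lambda>j. 0) \<in> K" shows "hits n r K U"
proof -
  obtain a v where av: "a \<in> Rn n" "\<forall>l<n. v l \<in> Rn n" "indep n v"
    "U = {(\<lambda>j. a j + (\<Sum>l<n. t l * v l j)) | t. True}"
    using assms(1) unfolding affsub_def affsub_indep by blast
  have "(\<lambda>j. - a j) \<in> Rn n" using av(1) by (simp add: Rn_def)
  then obtain c where c: "(\<lambda>j. - a j) = lincomb n c v" using indep_span av by blast
  have "(\<lambda>j. a j + (\<Sum>l<n. c l * v l j)) = (\<lambda>j. 0)"
  proof
    fix j
    have "- a j = lincomb n c v j" using c by metis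
    then show "a j + (\<Sum>l<n. c l * v l j) = 0" by (simp add: lincomb_def)
  qed
  then have "(\<lambda>j. 0) \<in> U" using av(4) by (metis (mono_tags, lifting) mem_Collect_eq)
  moreover have "(\<lambda>j. 0) \<in> Zn n" by (simp add: Zn_def Rn_def)
  ultimately show ?thesis unfolding hits_def using assms(2) by force
qed

lemma good_upD: "good n K \<Longrightarrow> s \<le> n \<Longrightarrow> real s / 2 < r \<Longrightarrow> affsub n (n - s) U \<Longrightarrow> hits n r K U"
  unfolding good_def by blast

lemma good_loD: "good n K \<Longrightarrow> s \<le> n \<Longrightarrow> r < real s / 2 \<Longrightarrow>
   \<exists>U. affsub n (n - s) U \<and> (\<forall>\<mu>. 0 \<le> \<mu> \<and> \<mu> \<le> r \<longrightarrow> \<not> hits n \<mu> K U)"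
  unfolding good_def by blast

lemma good_RnD: "good n K \<Longrightarrow> K \<subseteq> Rn n"
  unfolding good_def by blast

lemma good_starD: "good n K \<Longrightarrow> star0 K"
  unfolding good_def by blast

lemma affsubI: "a \<in> Rn n \<Longrightarrow> (\<forall>l<k. v l \<in> Rn n) \<Longrightarrow> indep k v \<Longrightarrow>
   affsub n k {(\<lambda>j. a j + (\<Sum>l<k. t l * v l j)) | t. True}"
  unfolding affsub_def affsub_indep by blast

lemma affsubE: "affsub n k U \<Longrightarrow> (\<And>a v. a \<in> Rn n \<Longrightarrow> (\<forall>l<k. v l \<in> Rn n) \<Longrightarrow> indep k v \<Longrightarrow>
   U = {(\<lambda>j. a j + (\<Sum>l<k. t l * v l j)) | t. True} \<Longrightarrow> P) \<Longrightarrow> P"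
  unfolding affsub_def affsub_indep by blast

lemma dsumI: "t \<in> {0..1} \<Longrightarrow> x \<in> K \<Longrightarrow> y \<in> L \<Longrightarrow> (\<lambda>j. t * x j + (1 - t) * y j) \<in> dsum K L"
  unfolding dsum_def by blast

lemma shiftI: "x \<in> K \<Longrightarrow> (\<lambda>j. if off \<le> j then x (j - off) else 0) \<in> shift off K"
  unfolding shift_def by blast

lemma affmemI: "(\<lambda>j. a j + (\<Sum>l<k. t l * v l j)) \<in> {(\<lambda>j. a j + (\<Sum>l<k. t l * v l j)) | t. True}"
  by blast

definition Sset :: "nat \<Rightarrow> nat \<Rightarrow> (nat \<Rightarrow> real) set \<Rightarrow> real set" where
  "Sset n s K = {\<mu>. \<mu> \<ge> 0 \<and> (\<forall>U. affsub n (n - s) U \<longrightarrow> hits n \<mu> K U)}"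

lemma covmin_Sset: "covmin n s K = Inf (Sset n s K)"
  unfolding covmin_def Sset_def hits_def by simp

lemma cov_props:
  assumes st: "star0 K" and ne: "Sset n s K \<noteq> {}" and cv: "covmin n s K = real s / 2"
  shows "\<forall>r. real s / 2 < r \<longrightarrow> (\<forall>U. affsub n (n - s) U \<longrightarrow> hits n r K U)"
    and "\<forall>r. r < real s / 2 \<longrightarrow> (\<exists>U. affsub n (n - s) U \<and> (\<forall>\<mu>. 0 \<le> \<mu> \<and> \<mu> \<le> r \<longrightarrow> \<not> hits n \<mu> K U))"
proof -
  have inf: "Inf (Sset n s K) = real s / 2" using cv covmin_Sset by simp
  show "\<forall>r. real s / 2 < r \<longrightarrow> (\<forall>U. affsub n (n - s) U \<longrightarrow> hits n r K U)"
  proof (intro allI impI)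
    fix r U assume l: "real s / 2 < r" and U: "affsub n (n - s) U"
    obtain \<mu> where mu: "\<mu> \<in> Sset n s K" "\<mu> < r" using cInf_lessD[OF ne, of r] inf l by auto
    then have "hits n \<mu> K U" "0 \<le> \<mu>" using U unfolding Sset_def by auto
    then show "hits n r K U" using hits_mono[OF st] mu by auto
  qed
  show "\<forall>r. r < real s / 2 \<longrightarrow> (\<exists>U. affsub n (n - s) U \<and> (\<forall>\<mu>. 0 \<le> \<mu> \<and> \<mu> \<le> r \<longrightarrow> \<not> hits n \<mu> K U))"
  proof (intro allI impI)
    fix r assume l: "r < real s / 2"
    show "\<exists>U. affsub n (n - s) U \<and> (\<forall>\<mu>. 0 \<le> \<mu> \<and> \<mu> \<le> r \<longrightarrow> \<not> hits n \<mu> K U)"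
    proof (cases "r < 0")
      case True
      obtain U where "affsub n (n - s) U" using affsub_exists[of "n - s" n] by auto
      then show ?thesis using True by auto
    next
      case False
      have bdd: "bdd_below (Sset n s K)" unfolding Sset_def bdd_below_def by auto
      have "r \<notin> Sset n s K"
      proof
        assume "r \<in> Sset n s K"
        then have "Inf (Sset n s K) \<le> r" using cInf_lower[OF _ bdd] by blast
        then show False using inf l by simp
      qed
      then obtain U where U: "affsub n (n - s) U" "\<not> hits n r K U" using False unfolding Sset_def by auto
      have "\<forall>\<mu>. 0 \<le> \<mu> \<and> \<mu> \<le> r \<longrightarrow> \<not> hits n \<mu> K U" using hits_mono[OF st] U(2) by blast
      then show ?thesis using U(1) by blast
    qed
  qed
qed

lemma good_final:
  assumes "good n K" "1 \<le> i" "i \<le> n"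
  shows "covmin n i K = real i / 2"
proof -
  have up: "\<forall>r. real i / 2 < r \<longrightarrow> (\<forall>U. affsub n (n - i) U \<longrightarrow> hits n r K U)"
    and lo: "\<forall>r. r < real i / 2 \<longrightarrow> (\<exists>U. affsub n (n - i) U \<and> (\<forall>\<mu>. 0 \<le> \<mu> \<and> \<mu> \<le> r \<longrightarrow> \<not> hits n \<mu> K U))"
    using assms unfolding good_def by auto
  have inS: "r \<in> Sset n i K" if "real i / 2 < r" for r
    using up that unfolding Sset_def by (auto intro: order.trans[of 0 "real i / 2"])
  have "Inf (Sset n i K) = real i / 2"
  proof (rule cInf_eq_non_empty)
    show "Sset n i K \<noteq> {}" using inS[of "real i / 2 + 1"] by auto
  next
    fix x assume x: "x \<in> Sset n i K"
    show "real i / 2 \<le> x"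
    proof (rule ccontr)
      assume "\<not> real i / 2 \<le> x"
      then obtain U where U: "affsub n (n - i) U" "\<not> hits n x K U"
        using lo x unfolding Sset_def by force
      then show False using x unfolding Sset_def by auto
    qed
  next
    fix y assume y: "\<And>x. x \<in> Sset n i K \<Longrightarrow> y \<le> x"
    show "y \<le> real i / 2"
    proof (rule ccontr)
      assume "\<not> y \<le> real i / 2"
      then have "(y + real i / 2) / 2 \<in> Sset n i K" by (intro inS) simp
      then have "y \<le> (y + real i / 2) / 2" using y by blast
      then show False using \<open>\<not> y \<le> real i / 2\<close> by simp
    qed
  qed
  then show ?thesis using covmin_Sset by simp
qed



definition pL :: "nat \<Rightarrow> nat \<Rightarrow> (nat \<Rightarrow> real) \<Rightarrow> (nat \<Rightarrow> real)" where
  "pL n m x = (\<lambda>j. if j < m then x (j + n) else 0)"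

lemma sum_split: "(\<Sum>l<a+b. f l) = (\<Sum>l<a. f l) + (\<Sum>l<b. f (a+l))" for a b :: nat
  by (induction b) (simp_all add: ac_simps)

lemma lincomb_delta: assumes "l < k" shows "lincomb k (\<lambda>i. if i = l then 1 else 0) v = v l"
proof
  fix j
  have "lincomb k (\<lambda>i. if i = l then 1 else 0) v j = (\<Sum>i<k. if i = l then v l j else 0)"
    unfolding lincomb_def by (intro sum.cong) auto
  also have "\<dots> = v l j" using assms by simp
  finally show "lincomb k (\<lambda>i. if i = l then 1 else 0) v j = v l j" .
qed

lemma funD: "f = g \<Longrightarrow> f j = g j" by simp

lemma dsum_upper:
  assumes gK: "good n K" and gL: "good m L" and s: "s \<le> n + m" and r: "real s / 2 < r"
    and U: "affsub (n + m) (n + m - s) U"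
  shows "hits (n + m) r (dsum K (shift n L)) U"
proof -
  define N where "N = n + m"
  define k where "k = N - s"
  obtain a v where av: "a \<in> Rn N" "\<forall>l<k. v l \<in> Rn N" "indep k v"
    "U = {(\<lambda>j. a j + (\<Sum>l<k. t l * v l j)) | t. True}"
    using U unfolding N_def k_def by (rule affsubE) blast
  obtain k1 k2 w y where kk: "k1 + k2 = k" and yz: "\<forall>l<k2. \<forall>j<n. y l j = 0"
    and iw: "indep k1 (\<lambda>l. pK n (w l))" and jw: "jind k1 w k2 y"
    and sp: "\<forall>c1 c2. \<exists>c. (\<lambda>j. lincomb k1 c1 w j + lincomb k2 c2 y j) = lincomb k c v"
    using split_lemma[OF av(3), of n] by blast
  have yRn: "y l \<in> Rn N" if l: "l < k2" for l
  proof -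
    obtain c where c: "(\<lambda>j. lincomb k1 (\<lambda>i. 0) w j + lincomb k2 (\<lambda>i. if i = l then 1 else 0) y j) = lincomb k c v"
      using sp by blast
    then have "y l = lincomb k c v" using lincomb_delta[OF l] by (simp add: lincomb_zero)
    then show ?thesis using lincomb_Rn[OF av(2)] by simp
  qed
  have k1n: "k1 \<le> n"
    by (rule indep_bound[OF iw]) (auto simp: pK_def Rn_def)
  have indL: "indep k2 (\<lambda>l. pL n m (y l))"
    unfolding indep_def
  proof (intro allI impI)
    fix c l assume h: "lincomb k2 c (\<lambda>l. pL n m (y l)) = (\<lambda>j. 0)" and l: "l < k2"
    have "lincomb k2 c y = (\<lambda>j. 0)"
    proof
      fix j
      show "lincomb k2 c y j = 0"
      proof (cases "j < n")
        case True then show ?thesis using yz by (simp add: lincomb_def)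
      next
        case False
        show ?thesis
        proof (cases "j < N")
          case True
          have "lincomb k2 c (\<lambda>l. pL n m (y l)) (j - n) = lincomb k2 c y j"
            using True False unfolding lincomb_def pL_def N_def by (intro sum.cong) auto
          then show ?thesis using h by (metis)
        next
          case False
          then show ?thesis using yRn unfolding lincomb_def Rn_def by simp
        qed
      qed
    qed
    then have "(\<lambda>j. lincomb k1 (\<lambda>i. 0) w j + lincomb k2 c y j) = (\<lambda>j. 0)"
      by (simp add: lincomb_zero)
    then show "c l = 0" using jw l unfolding jind_def by blast
  qed
  have k2m: "k2 \<le> m"
    by (rule indep_bound[OF indL]) (auto simp: pL_def Rn_def)
  define sK where "sK = n - k1"
  define sL where "sL = m - k2"
  have sKL: "sK + sL = s" "sK \<le> n" "sL \<le> m"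
    using kk k1n k2m s unfolding sK_def sL_def k_def N_def by auto
  have sKLr: "real sK + real sL = real s" using sKL(1) by (metis of_nat_add)
  define \<epsilon> where "\<epsilon> = (r - real s / 2) / 2"
  define rK where "rK = real sK / 2 + \<epsilon>"
  define rL where "rL = real sL / 2 + \<epsilon>"
  have ep: "\<epsilon> > 0" using r by (simp add: \<epsilon>_def)
  have rKL: "rK + rL = r" using sKLr unfolding rK_def rL_def \<epsilon>_def by (simp add: field_simps)
  have rKp: "rK > 0" "rL > 0" using ep unfolding rK_def rL_def by auto
  have rp: "r > 0" using rKp rKL by simp
  define UK where "UK = {(\<lambda>j. pK n a j + (\<Sum>l<k1. t l * pK n (w l) j)) | t. True}"
  have aUK: "affsub n (n - sK) UK"
  proof -
    have "n - sK = k1" using k1n sK_def by simp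
    moreover have "pK n a \<in> Rn n" "\<forall>l<k1. pK n (w l) \<in> Rn n" by (auto simp: pK_def Rn_def)
    ultimately show ?thesis unfolding UK_def using iw affsubI[of "pK n a" n k1 "\<lambda>l. pK n (w l)"] by simp
  qed
  have "hits n rK K UK"
    by (rule good_upD[OF gK sKL(2) _ aUK]) (use ep in \<open>simp add: rK_def\<close>)
  then obtain x z t1 where x: "x \<in> K" "z \<in> Zn n"
    and eqK: "(\<lambda>j. rK * x j + z j) = (\<lambda>j. pK n a j + (\<Sum>l<k1. t1 l * pK n (w l) j))"
    unfolding hits_def UK_def by blast
  define b where "b = (\<lambda>j. a j + lincomb k1 t1 w j)"
  define F where "F = {(\<lambda>j. pL n m b j + (\<Sum>l<k2. t l * pL n m (y l) j)) | t. True}"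
  have aF: "affsub m (m - sL) F"
  proof -
    have "m - sL = k2" using k2m sL_def by simp
    moreover have "pL n m b \<in> Rn m" "\<forall>l<k2. pL n m (y l) \<in> Rn m" by (auto simp: pL_def Rn_def)
    ultimately show ?thesis unfolding F_def using indL affsubI[of "pL n m b" m k2 "\<lambda>l. pL n m (y l)"] by simp
  qed
  have "hits m rL L F"
    by (rule good_upD[OF gL sKL(3) _ aF]) (use ep in \<open>simp add: rL_def\<close>)
  then obtain y' z' t2 where y': "y' \<in> L" "z' \<in> Zn m"
    and eqL: "(\<lambda>j. rL * y' j + z' j) = (\<lambda>j. pL n m b j + (\<Sum>l<k2. t2 l * pL n m (y l) j))"
    unfolding hits_def F_def by blast
  obtain c where c: "(\<lambda>j. lincomb k1 t1 w j + lincomb k2 t2 y j) = lincomb k c v" using sp by blast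
  have KR: "K \<subseteq> Rn n" and LR: "L \<subseteq> Rn m" using good_RnD gK gL by auto
  have xR: "x j = 0" if "n \<le> j" for j using x(1) KR that unfolding Rn_def by auto
  have y'R: "y' j = 0" if "m \<le> j" for j using y'(1) LR that unfolding Rn_def by auto
  have zR: "z' j = 0" if "m \<le> j" for j using y'(2) that unfolding Zn_def Rn_def by auto
  define \<tau> where "\<tau> = rK / r"
  define Y where "Y = (\<lambda>j. if n \<le> j then y' (j - n) else 0)"
  define X where "X = (\<lambda>j. \<tau> * x j + (1 - \<tau>) * Y j)"
  define Z where "Z = (\<lambda>j. if j < n then z j else z' (j - n))"
  have t1: "r * \<tau> = rK" "r * (1 - \<tau>) = rL" using rp rKL unfolding \<tau>_def by (auto simp: field_simps)
  have tau: "\<tau> \<in> {0..1}" using rKp rp rKL unfolding \<tau>_def by auto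
  have YL: "Y \<in> shift n L" unfolding Y_def using y'(1) by (rule shiftI)
  have XD: "X \<in> dsum K (shift n L)" unfolding X_def using tau x(1) YL by (rule dsumI)
  have ZZ: "Z \<in> Zn N"
    using x(2) y'(2) unfolding Zn_def Rn_def Z_def N_def by auto
  have "(\<lambda>j. r * X j + Z j) = (\<lambda>j. a j + (\<Sum>l<k. c l * v l j))"
  proof
    fix j
    have cj: "lincomb k1 t1 w j + lincomb k2 t2 y j = lincomb k c v j" using funD[OF c, of j] by simp
    have "r * X j = (r * \<tau>) * x j + (r * (1 - \<tau>)) * Y j" unfolding X_def by (simp add: algebra_simps)
    then have rX: "r * X j = rK * x j + rL * Y j" unfolding t1 .
    show "r * X j + Z j = a j + (\<Sum>l<k. c l * v l j)"
    proof (cases "j < n")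
      case True
      have "rK * x j + z j = a j + lincomb k1 t1 w j"
        using funD[OF eqK, of j] True by (simp add: pK_def lincomb_def)
      moreover have "lincomb k2 t2 y j = 0" using yz True by (simp add: lincomb_def)
      ultimately show ?thesis using True rX cj unfolding Y_def Z_def lincomb_def by simp
    next
      case False
      show ?thesis
      proof (cases "j < N")
        case True
        have "rL * y' (j - n) + z' (j - n) = pL n m b (j - n) + (\<Sum>l<k2. t2 l * pL n m (y l) (j - n))"
          using funD[OF eqL, of "j - n"] by simp
        also have "\<dots> = b j + lincomb k2 t2 y j"
          using True False unfolding pL_def N_def lincomb_def by simp
        finally have "rL * y' (j - n) + z' (j - n) = b j + lincomb k2 t2 y j" .
        then show ?thesis using False rX cj xR[of j] unfolding Y_def Z_def b_def lincomb_def by simp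
      next
        case False
        have "a j = 0" "\<forall>l<k. v l j = 0" using av(1,2) False unfolding Rn_def by auto
        moreover have "x j = 0" "y' (j - n) = 0" "z' (j - n) = 0"
          using xR y'R zR False \<open>\<not> j < n\<close> unfolding N_def by auto
        ultimately show ?thesis using \<open>\<not> j < n\<close> rX unfolding Y_def Z_def by simp
      qed
    qed
  qed
  then have "(\<lambda>j. r * X j + Z j) \<in> U" using av(4) affmemI[where a=a and k=k and t=c and v=v] by simp
  then show ?thesis unfolding hits_def using XD ZZ N_def by blast
qed



lemma dsum_lower:
  assumes gK: "good n K" and gL: "good m L" and s: "s \<le> n + m" and r: "r < real s / 2"
  shows "\<exists>U. affsub (n + m) (n + m - s) U \<and> (\<forall>\<mu>. 0 \<le> \<mu> \<and> \<mu> \<le> r \<longrightarrow> \<not> hits (n + m) \<mu> (dsum K (shift n L)) U)"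
proof -
  define N where "N = n + m"
  define sK where "sK = min s n"
  define sL where "sL = s - sK"
  have sKL: "sK + sL = s" "sK \<le> n" "sL \<le> m" using s unfolding sK_def sL_def by auto
  have sKLr: "real sK + real sL = real s" using sKL(1) by (metis of_nat_add)
  define \<epsilon> where "\<epsilon> = (real s / 2 - r) / 2"
  define rK where "rK = real sK / 2 - \<epsilon>"
  define rL where "rL = real sL / 2 - \<epsilon>"
  have ep: "\<epsilon> > 0" using r by (simp add: \<epsilon>_def)
  have rKL: "rK + rL = r" using sKLr unfolding rK_def rL_def \<epsilon>_def by (simp add: field_simps)
  obtain UK where UK: "affsub n (n - sK) UK" and noK: "\<forall>\<mu>. 0 \<le> \<mu> \<and> \<mu> \<le> rK \<longrightarrow> \<not> hits n \<mu> K UK"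
    using good_loD[OF gK sKL(2), of rK] ep unfolding rK_def by auto
  obtain UL where UL: "affsub m (m - sL) UL" and noL: "\<forall>\<mu>. 0 \<le> \<mu> \<and> \<mu> \<le> rL \<longrightarrow> \<not> hits m \<mu> L UL"
    using good_loD[OF gL sKL(3), of rL] ep unfolding rL_def by auto
  define k1 where "k1 = n - sK"
  define k2 where "k2 = m - sL"
  obtain a1 w where aw: "a1 \<in> Rn n" "\<forall>l<k1. w l \<in> Rn n" "indep k1 w"
    "UK = {(\<lambda>j. a1 j + (\<Sum>l<k1. t l * w l j)) | t. True}"
    using UK unfolding k1_def by (rule affsubE) blast
  obtain a2 y where ay: "a2 \<in> Rn m" "\<forall>l<k2. y l \<in> Rn m" "indep k2 y"
    "UL = {(\<lambda>j. a2 j + (\<Sum>l<k2. t l * y l j)) | t. True}"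
    using UL unfolding k2_def by (rule affsubE) blast
  define A where "A = (\<lambda>j. if j < n then a1 j else a2 (j - n))"
  define V where "V = (\<lambda>l. if l < k1 then w l else (\<lambda>j. if n \<le> j then y (l - k1) (j - n) else 0))"
  define U where "U = {(\<lambda>j. A j + (\<Sum>l<k1+k2. t l * V l j)) | t. True}"
  have ident: "(\<Sum>l<k1+k2. t l * V l j) = lincomb k1 t w j + (if n \<le> j then lincomb k2 (\<lambda>l. t (k1 + l)) y (j - n) else 0)" for t j
  proof -
    have "(\<Sum>l<k1+k2. t l * V l j) = (\<Sum>l<k1. t l * V l j) + (\<Sum>l<k2. t (k1 + l) * V (k1 + l) j)"
      by (rule sum_split)
    also have "(\<Sum>l<k1. t l * V l j) = lincomb k1 t w j"
      unfolding lincomb_def V_def by (intro sum.cong) auto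
    also have "(\<Sum>l<k2. t (k1 + l) * V (k1 + l) j) = (if n \<le> j then lincomb k2 (\<lambda>l. t (k1 + l)) y (j - n) else 0)"
      unfolding lincomb_def V_def by simp
    finally show ?thesis .
  qed
  have wz: "lincomb k1 t w j = 0" if "n \<le> j" for t j
    using lincomb_Rn[OF aw(2), of t] that unfolding Rn_def by auto
  have yzz: "lincomb k2 t y j = 0" if "m \<le> j" for t j
    using lincomb_Rn[OF ay(2), of t] that unfolding Rn_def by auto
  have aU: "affsub N (N - s) U"
  proof -
    have "N - s = k1 + k2" using sKL s unfolding N_def k1_def k2_def by auto
    moreover have "A \<in> Rn N" using aw(1) ay(1) unfolding A_def Rn_def N_def by auto
    moreover have "\<forall>l<k1+k2. V l \<in> Rn N" using aw(2) ay(2) unfolding V_def Rn_def N_def by auto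
    moreover have "indep (k1 + k2) V"
      unfolding indep_def
    proof (intro allI impI)
      fix c l assume h: "lincomb (k1 + k2) c V = (\<lambda>j. 0)" and l: "l < k1 + k2"
      have hj: "lincomb k1 c w j + (if n \<le> j then lincomb k2 (\<lambda>l. c (k1 + l)) y (j - n) else 0) = 0" for j
        using funD[OF h, of j] ident[of c j] unfolding lincomb_def by simp
      have "lincomb k1 c w = (\<lambda>j. 0)"
      proof
        fix j show "lincomb k1 c w j = 0"
          using hj[of j] wz[of j c] by (cases "n \<le> j") auto
      qed
      then have c1: "\<forall>l<k1. c l = 0" using aw(3) unfolding indep_def by blast
      have "lincomb k2 (\<lambda>l. c (k1 + l)) y = (\<lambda>j. 0)"
      proof
        fix j show "lincomb k2 (\<lambda>l. c (k1 + l)) y j = 0"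
          using hj[of "j + n"] wz[of "j + n" c] by simp
      qed
      then have c2: "\<forall>l<k2. c (k1 + l) = 0" using ay(3) unfolding indep_def by blast
      show "c l = 0"
      proof (cases "l < k1")
        case True then show ?thesis using c1 by simp
      next
        case False
        then have "l = k1 + (l - k1)" "l - k1 < k2" using l by auto
        then show ?thesis using c2 by metis
      qed
    qed
    ultimately show ?thesis unfolding U_def using affsubI[of A N "k1+k2" V] by simp
  qed
  have KR: "K \<subseteq> Rn n" and LR: "L \<subseteq> Rn m" using good_RnD gK gL by auto
  have nohit: "\<not> hits N \<mu> (dsum K (shift n L)) U" if mu: "0 \<le> \<mu>" "\<mu> \<le> r" for \<mu>
  proof
    assume "hits N \<mu> (dsum K (shift n L)) U"
    then obtain X Z t where X: "X \<in> dsum K (shift n L)" and Z: "Z \<in> Zn N"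
      and eq: "(\<lambda>j. \<mu> * X j + Z j) = (\<lambda>j. A j + (\<Sum>l<k1+k2. t l * V l j))"
      unfolding hits_def U_def by blast
    obtain \<tau> x Y where XX: "X = (\<lambda>j. \<tau> * x j + (1 - \<tau>) * Y j)" "\<tau> \<in> {0..1}" "x \<in> K" "Y \<in> shift n L"
      using X unfolding dsum_def by blast
    obtain y' where Y: "Y = (\<lambda>j. if n \<le> j then y' (j - n) else 0)" "y' \<in> L"
      using XX(4) unfolding shift_def by blast
    have xR: "x j = 0" if "n \<le> j" for j using XX(3) KR that unfolding Rn_def by auto
    have y'R: "y' j = 0" if "m \<le> j" for j using Y(2) LR that unfolding Rn_def by auto
    have eqj: "\<mu> * (\<tau> * x j + (1 - \<tau>) * Y j) + Z j = A j + lincomb k1 t w j + (if n \<le> j then lincomb k2 (\<lambda>l. t (k1 + l)) y (j - n) else 0)" for j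
      using funD[OF eq, of j] ident[of t j] XX(1) by simp
    have hK: "hits n (\<mu> * \<tau>) K UK"
    proof -
      have "pK n Z \<in> Zn n" using Z unfolding Zn_def Rn_def pK_def N_def by auto
      moreover have "(\<lambda>j. (\<mu> * \<tau>) * x j + pK n Z j) = (\<lambda>j. a1 j + (\<Sum>l<k1. t l * w l j))"
      proof
        fix j
        show "(\<mu> * \<tau>) * x j + pK n Z j = a1 j + (\<Sum>l<k1. t l * w l j)"
        proof (cases "j < n")
          case True
          then show ?thesis using eqj[of j] unfolding Y(1) A_def pK_def lincomb_def by (simp add: algebra_simps)
        next
          case False
          then show ?thesis using xR[of j] wz[of j t] aw(1) unfolding pK_def lincomb_def Rn_def by simp
        qed
      qed
      moreover have "(\<lambda>j. a1 j + (\<Sum>l<k1. t l * w l j)) \<in> UK"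
        unfolding aw(4) by (rule affmemI)
      ultimately have "pK n Z \<in> Zn n" "(\<lambda>j. (\<mu> * \<tau>) * x j + pK n Z j) \<in> UK" by simp_all
      then show ?thesis unfolding hits_def using XX(3) by blast
    qed
    have hL: "hits m (\<mu> * (1 - \<tau>)) L UL"
    proof -
      have "pL n m Z \<in> Zn m" using Z unfolding Zn_def Rn_def pL_def N_def by auto
      moreover have "(\<lambda>j. (\<mu> * (1 - \<tau>)) * y' j + pL n m Z j) = (\<lambda>j. a2 j + (\<Sum>l<k2. t (k1 + l) * y l j))"
      proof
        fix j
        show "(\<mu> * (1 - \<tau>)) * y' j + pL n m Z j = a2 j + (\<Sum>l<k2. t (k1 + l) * y l j)"
        proof (cases "j < m")
          case True
          have "\<mu> * (\<tau> * x (j + n) + (1 - \<tau>) * Y (j + n)) + Z (j + n) = A (j + n) + lincomb k1 t w (j + n) + lincomb k2 (\<lambda>l. t (k1 + l)) y j"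
            using eqj[of "j + n"] by simp
          then show ?thesis using True xR[of "j + n"] wz[of "j + n" t] unfolding Y(1) A_def pL_def lincomb_def
            by (simp add: algebra_simps)
        next
          case False
          then show ?thesis using y'R[of j] yzz[of j "\<lambda>l. t (k1 + l)"] ay(1) unfolding pL_def lincomb_def Rn_def by simp
        qed
      qed
      moreover have "(\<lambda>j. a2 j + (\<Sum>l<k2. t (k1 + l) * y l j)) \<in> UL"
        unfolding ay(4) by (rule affmemI)
      ultimately have "pL n m Z \<in> Zn m" "(\<lambda>j. (\<mu> * (1 - \<tau>)) * y' j + pL n m Z j) \<in> UL" by simp_all
      then show ?thesis unfolding hits_def using Y(2) by blast
    qed
    have t01: "0 \<le> \<tau>" "\<tau> \<le> 1" using XX(2) by auto
    have "0 \<le> \<mu> * \<tau>" "0 \<le> \<mu> * (1 - \<tau>)" using mu t01 by auto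
    then have "rK < \<mu> * \<tau>" "rL < \<mu> * (1 - \<tau>)" using noK noL hK hL by (meson not_le)+
    then have "rK + rL < \<mu>" by (simp add: algebra_simps)
    then show False using rKL mu by simp
  qed
  show ?thesis using aU nohit unfolding N_def by blast
qed



lemma dsum_Rn: assumes "K \<subseteq> Rn N" "L \<subseteq> Rn N" shows "dsum K L \<subseteq> Rn N"
proof
  fix X assume "X \<in> dsum K L"
  then obtain \<tau> x y where X: "X = (\<lambda>j. \<tau> * x j + (1 - \<tau>) * y j)" "x \<in> K" "y \<in> L"
    unfolding dsum_def by blast
  have "x \<in> Rn N" "y \<in> Rn N" using X assms by auto
  then show "X \<in> Rn N" using X(1) unfolding Rn_def by simp
qed

lemma shift_Rn: "L \<subseteq> Rn m \<Longrightarrow> shift n L \<subseteq> Rn (n + m)"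
  unfolding shift_def Rn_def by auto

lemma shift_star: assumes "star0 L" shows "star0 (shift n L)"
proof -
  have "(\<lambda>j. 0) \<in> shift n L"
    using shiftI[of "\<lambda>j. 0" L n] assms unfolding star0_def by simp
  moreover have "(\<lambda>j. t * Y j) \<in> shift n L" if h: "Y \<in> shift n L" "0 \<le> t" "t \<le> 1" for Y t
  proof -
    obtain y where y: "y \<in> L" "Y = (\<lambda>j. if n \<le> j then y (j - n) else 0)"
      using h(1) unfolding shift_def by blast
    have "(\<lambda>j. t * y j) \<in> L" using assms y(1) h unfolding star0_def by blast
    from shiftI[OF this, of n] show ?thesis using y(2) by (simp add: if_distrib cong: if_cong)
  qed
  ultimately show ?thesis unfolding star0_def by blast
qed

lemma dsum_star: assumes "star0 K" "star0 L" shows "star0 (dsum K L)"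
proof -
  have "(\<lambda>j. 0) \<in> dsum K L"
    using dsumI[of 1 "\<lambda>j. 0" K "\<lambda>j. 0" L] assms unfolding star0_def by simp
  moreover have "(\<lambda>j. t * X j) \<in> dsum K L" if h: "X \<in> dsum K L" "0 \<le> t" "t \<le> 1" for X t
  proof -
    obtain \<tau> x y where X: "X = (\<lambda>j. \<tau> * x j + (1 - \<tau>) * y j)" "\<tau> \<in> {0..1}" "x \<in> K" "y \<in> L"
      using h(1) unfolding dsum_def by blast
    have "(\<lambda>j. t * x j) \<in> K" "(\<lambda>j. t * y j) \<in> L" using assms X h unfolding star0_def by blast+
    from dsumI[OF X(2) this] show ?thesis using X(1) by (simp add: algebra_simps)
  qed
  ultimately show ?thesis unfolding star0_def by blast
qed

lemma dsum_good: assumes gK: "good n K" and gL: "good m L"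
  shows "good (n + m) (dsum K (shift n L))"
proof -
  have "dsum K (shift n L) \<subseteq> Rn (n + m)"
  proof (rule dsum_Rn)
    show "K \<subseteq> Rn (n + m)" using good_RnD[OF gK] unfolding Rn_def by auto
    show "shift n L \<subseteq> Rn (n + m)" using shift_Rn[OF good_RnD[OF gL]] .
  qed
  moreover have "star0 (dsum K (shift n L))"
    using dsum_star[OF good_starD[OF gK] shift_star[OF good_starD[OF gL]]] .
  ultimately show ?thesis
    unfolding good_def using dsum_upper[OF gK gL] dsum_lower[OF gK gL] by blast
qed



lemma tsv_eval: assumes "j < l" shows "(\<Sum>i\<le>l. c i * tsvert l i j) = c j - c l"
proof -
  have "(\<Sum>i\<le>l. c i * tsvert l i j) = (\<Sum>i<l. c i * tsvert l i j) + c l * tsvert l l j"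
    by (simp add: lessThan_Suc_atMost[symmetric])
  also have "(\<Sum>i<l. c i * tsvert l i j) = (\<Sum>i<l. if i = j then c j else 0)"
    unfolding tsvert_def by (intro sum.cong) auto
  also have "\<dots> = c j" using assms by simp
  finally show ?thesis using assms by (simp add: tsvert_def)
qed

lemma tsv_eval2: assumes "l \<le> j" shows "(\<Sum>i\<le>l. c i * tsvert l i j) = 0"
  unfolding tsvert_def using assms by (intro sum.neutral) auto

lemma tsimplex_Rn: "tsimplex l \<subseteq> Rn l"
  unfolding tsimplex_def Rn_def using tsv_eval2 by auto

lemma tsimplex_convex:
  assumes "x \<in> tsimplex l" "x' \<in> tsimplex l" "0 \<le> t" "t \<le> 1"
  shows "(\<lambda>j. t * x j + (1 - t) * x' j) \<in> tsimplex l"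
proof -
  obtain c where c: "x = (\<lambda>j. \<Sum>i\<le>l. c i * tsvert l i j)" "\<forall>i\<le>l. c i \<ge> 0" "(\<Sum>i\<le>l. c i) = 1"
    using assms(1) unfolding tsimplex_def by blast
  obtain c' where c': "x' = (\<lambda>j. \<Sum>i\<le>l. c' i * tsvert l i j)" "\<forall>i\<le>l. c' i \<ge> 0" "(\<Sum>i\<le>l. c' i) = 1"
    using assms(2) unfolding tsimplex_def by blast
  define d where "d = (\<lambda>i. t * c i + (1 - t) * c' i)"
  have "(\<lambda>j. t * x j + (1 - t) * x' j) = (\<lambda>j. \<Sum>i\<le>l. d i * tsvert l i j)"
  proof
    fix j
    have "(\<Sum>i\<le>l. d i * tsvert l i j) = (\<Sum>i\<le>l. t * (c i * tsvert l i j) + (1 - t) * (c' i * tsvert l i j))"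
      unfolding d_def by (intro sum.cong) (simp_all add: algebra_simps)
    also have "\<dots> = t * x j + (1 - t) * x' j"
      unfolding c(1) c'(1) by (simp add: sum.distrib sum_distrib_left)
    finally show "t * x j + (1 - t) * x' j = (\<Sum>i\<le>l. d i * tsvert l i j)" by simp
  qed
  moreover have "\<forall>i\<le>l. d i \<ge> 0" using c(2) c'(2) assms(3,4) unfolding d_def by simp
  moreover have "(\<Sum>i\<le>l. d i) = 1" using c(3) c'(3) unfolding d_def
    by (simp add: sum.distrib sum_distrib_left[symmetric])
  ultimately show ?thesis unfolding tsimplex_def by blast
qed

lemma translI: "x \<in> T \<Longrightarrow> (\<lambda>j. u j + x j) \<in> transl u T"
  unfolding transl_def by blast

lemma transl_star:
  assumes "(\<lambda>j. 0) \<in> transl u (tsimplex l)"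
  shows "star0 (transl u (tsimplex l))"
proof -
  obtain x0 where x0: "x0 \<in> tsimplex l" "(\<lambda>j. 0) = (\<lambda>j. u j + x0 j)"
    using assms unfolding transl_def by blast
  have x0u: "x0 j = - u j" for j using x0(2) by (metis add_eq_0_iff)
  have "(\<lambda>j. t * p j) \<in> transl u (tsimplex l)" if h: "p \<in> transl u (tsimplex l)" "0 \<le> t" "t \<le> 1" for p t
  proof -
    obtain x where x: "x \<in> tsimplex l" "p = (\<lambda>j. u j + x j)" using h(1) unfolding transl_def by blast
    have "(\<lambda>j. t * x j + (1 - t) * x0 j) \<in> tsimplex l" using tsimplex_convex[OF x(1) x0(1) h(2,3)] .
    moreover have "(\<lambda>j. t * p j) = (\<lambda>j. u j + (t * x j + (1 - t) * x0 j))"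
      unfolding x(2) x0u by (simp add: algebra_simps)
    ultimately show ?thesis using translI by metis
  qed
  then show ?thesis using assms unfolding star0_def by blast
qed

lemma transl_Rn: "u \<in> Rn l \<Longrightarrow> transl u (tsimplex l) \<subseteq> Rn l"
  using tsimplex_Rn unfolding transl_def Rn_def by fastforce

lemma affsub_transl:
  assumes "affsub n k U" "b \<in> Rn n"
  shows "affsub n k ((\<lambda>p. (\<lambda>j. p j + b j)) ` U)"
proof -
  obtain a v where av: "a \<in> Rn n" "\<forall>l<k. v l \<in> Rn n" "indep k v"
    "U = {(\<lambda>j. a j + (\<Sum>l<k. t l * v l j)) | t. True}"
    using assms(1) by (rule affsubE) blast
  have "(\<lambda>j. a j + b j) \<in> Rn n" using av(1) assms(2) unfolding Rn_def by simp
  from affsubI[OF this av(2,3)]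
  have "affsub n k {(\<lambda>j. (a j + b j) + (\<Sum>l<k. t l * v l j)) | t. True}" .
  moreover have "{(\<lambda>j. (a j + b j) + (\<Sum>l<k. t l * v l j)) | t. True} = (\<lambda>p. (\<lambda>j. p j + b j)) ` U"
  proof (rule set_eqI, rule iffI)
    fix q assume "q \<in> {(\<lambda>j. (a j + b j) + (\<Sum>l<k. t l * v l j)) | t. True}"
    then obtain t where q: "q = (\<lambda>j. (a j + b j) + (\<Sum>l<k. t l * v l j))" by blast
    show "q \<in> (\<lambda>p. (\<lambda>j. p j + b j)) ` U"
    proof (rule image_eqI[where x="(\<lambda>j. a j + (\<Sum>l<k. t l * v l j))"])
      show "(\<lambda>j. a j + (\<Sum>l<k. t l * v l j)) \<in> U" unfolding av(4) by (rule affmemI)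
      show "q = (\<lambda>p. (\<lambda>j. p j + b j)) (\<lambda>j. a j + (\<Sum>l<k. t l * v l j))"
        using q by (simp add: algebra_simps)
    qed
  next
    fix q assume "q \<in> (\<lambda>p. (\<lambda>j. p j + b j)) ` U"
    then obtain p where p: "p \<in> U" "q = (\<lambda>j. p j + b j)" by blast
    obtain t where "p = (\<lambda>j. a j + (\<Sum>l<k. t l * v l j))" using p(1) av(4) by blast
    then have "q = (\<lambda>j. (a j + b j) + (\<Sum>l<k. t l * v l j))" using p(2) by (simp add: algebra_simps)
    then show "q \<in> {(\<lambda>j. (a j + b j) + (\<Sum>l<k. t l * v l j)) | t. True}" by blast
  qed
  ultimately show ?thesis by simp
qed

lemma Sset_transl:
  assumes "u \<in> Rn l"
  shows "Sset l s (transl u T) = Sset l s T"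
proof -
  have eq: "(\<forall>U. affsub l (l - s) U \<longrightarrow> hits l \<mu> (transl u T) U) \<longleftrightarrow>
            (\<forall>U. affsub l (l - s) U \<longrightarrow> hits l \<mu> T U)" for \<mu>
  proof
    assume h: "\<forall>U. affsub l (l - s) U \<longrightarrow> hits l \<mu> (transl u T) U"
    show "\<forall>U. affsub l (l - s) U \<longrightarrow> hits l \<mu> T U"
    proof (intro allI impI)
      fix U assume U: "affsub l (l - s) U"
      have "(\<lambda>j. \<mu> * u j) \<in> Rn l" using assms unfolding Rn_def by simp
      from h affsub_transl[OF U this]
      have "hits l \<mu> (transl u T) ((\<lambda>p. (\<lambda>j. p j + \<mu> * u j)) ` U)" by blast
      then obtain x z where xz: "x \<in> transl u T" "z \<in> Zn l"
        "(\<lambda>j. \<mu> * x j + z j) \<in> (\<lambda>p. (\<lambda>j. p j + \<mu> * u j)) ` U" unfolding hits_def by blast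
      obtain x0 where x0: "x0 \<in> T" "x = (\<lambda>j. u j + x0 j)" using xz(1) unfolding transl_def by blast
      obtain q where q: "q \<in> U" "(\<lambda>j. \<mu> * x j + z j) = (\<lambda>j. q j + \<mu> * u j)" using xz(3) by blast
      have "(\<lambda>j. \<mu> * x0 j + z j) = q"
      proof
        fix j show "\<mu> * x0 j + z j = q j" using funD[OF q(2), of j] x0(2) by (simp add: algebra_simps)
      qed
      then have "(\<lambda>j. \<mu> * x0 j + z j) \<in> U" using q(1) by simp
      then show "hits l \<mu> T U" unfolding hits_def by (intro bexI[OF _ x0(1)] bexI[OF _ xz(2)])
    qed
  next
    assume h: "\<forall>U. affsub l (l - s) U \<longrightarrow> hits l \<mu> T U"
    show "\<forall>U. affsub l (l - s) U \<longrightarrow> hits l \<mu> (transl u T) U"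
    proof (intro allI impI)
      fix U assume U: "affsub l (l - s) U"
      have "(\<lambda>j. - (\<mu> * u j)) \<in> Rn l" using assms unfolding Rn_def by simp
      from h affsub_transl[OF U this]
      have "hits l \<mu> T ((\<lambda>p. (\<lambda>j. p j + - (\<mu> * u j))) ` U)" by blast
      then obtain x0 z where xz: "x0 \<in> T" "z \<in> Zn l"
        "(\<lambda>j. \<mu> * x0 j + z j) \<in> (\<lambda>p. (\<lambda>j. p j + - (\<mu> * u j))) ` U" unfolding hits_def by blast
      obtain q where q: "q \<in> U" "(\<lambda>j. \<mu> * x0 j + z j) = (\<lambda>j. q j + - (\<mu> * u j))" using xz(3) by blast
      have xin: "(\<lambda>j. u j + x0 j) \<in> transl u T" unfolding transl_def using xz(1) by blast
      have "(\<lambda>j. \<mu> * (u j + x0 j) + z j) = q"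
      proof
        fix j show "\<mu> * (u j + x0 j) + z j = q j" using funD[OF q(2), of j] by (simp add: algebra_simps)
      qed
      then have "(\<lambda>j. \<mu> * (u j + x0 j) + z j) \<in> U" using q(1) by simp
      then show "hits l \<mu> (transl u T) U" unfolding hits_def by (intro bexI[OF _ xin] bexI[OF _ xz(2)])
    qed
  qed
  show ?thesis unfolding Sset_def using eq by simp
qed

lemma Sset_nonempty:
  assumes l: "1 \<le> l"
  shows "real l \<in> Sset l s (tsimplex l)"
proof -
  have "hits l (real l) (tsimplex l) U" if U: "affsub l (l - s) U" for U
  proof -
    obtain a v where av: "a \<in> Rn l" "U = {(\<lambda>j. a j + (\<Sum>i<l - s. t i * v i j)) | t. True}"
      using U by (rule affsubE) blast
    have aU: "a \<in> U" using av(2) affmemI[where a=a and k="l - s" and t="\<lambda>i. 0" and v=v] by simp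
    define z where "z = (\<lambda>j. if j < l then of_int (floor (a j)) else (0::real))"
    define x where "x = (\<lambda>j. (a j - z j) / real l)"
    define b where "b = (1 - (\<Sum>j<l. x j)) / (real l + 1)"
    define c where "c = (\<lambda>i. if i < l then x i + b else b)"
    have lp: "real l > 0" using l by simp
    have x01: "0 \<le> x j \<and> x j \<le> 1 / real l" for j
    proof (cases "j < l")
      case True
      have "0 \<le> a j - z j" "a j - z j \<le> 1" unfolding z_def using True
        by (simp_all add: of_int_floor_le) (linarith)
      then show ?thesis using lp unfolding x_def by (simp add: divide_right_mono)
    next
      case False
      then have "a j = 0" using av(1) unfolding Rn_def by simp
      then show ?thesis using False lp unfolding x_def z_def by simp
    qed
    have "(\<Sum>j<l. x j) \<le> (\<Sum>j<l. 1 / real l)" by (intro sum_mono) (use x01 in auto)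
    also have "\<dots> = 1" using lp by simp
    finally have b0: "b \<ge> 0" unfolding b_def by simp
    have xx: "x = (\<lambda>j. \<Sum>i\<le>l. c i * tsvert l i j)"
    proof
      fix j show "x j = (\<Sum>i\<le>l. c i * tsvert l i j)"
      proof (cases "j < l")
        case True then show ?thesis using tsv_eval[OF True, of c] unfolding c_def by simp
      next
        case False
        then have "a j = 0" using av(1) unfolding Rn_def by simp
        then show ?thesis using False tsv_eval2[of l j c] unfolding x_def z_def by simp
      qed
    qed
    have "(\<Sum>i\<le>l. c i) = (\<Sum>i<l. c i) + c l" by (simp add: lessThan_Suc_atMost[symmetric])
    also have "(\<Sum>i<l. c i) = (\<Sum>i<l. x i) + real l * b" unfolding c_def by (simp add: sum.distrib)
    also have "c l = b" unfolding c_def by simp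
    finally have "(\<Sum>i\<le>l. c i) = (\<Sum>i<l. x i) + (real l + 1) * b" by (simp add: algebra_simps)
    then have csum: "(\<Sum>i\<le>l. c i) = 1" unfolding b_def using lp by simp
    have cpos: "\<forall>i\<le>l. c i \<ge> 0" using b0 x01 unfolding c_def by auto
    have xT: "x \<in> tsimplex l" unfolding tsimplex_def using xx csum cpos by blast
    have zZ: "z \<in> Zn l" unfolding Zn_def Rn_def z_def by auto
    have "(\<lambda>j. real l * x j + z j) = a" unfolding x_def using lp by (auto simp: fun_eq_iff)
    then show ?thesis unfolding hits_def using xT zZ aU by metis
  qed
  then show ?thesis unfolding Sset_def by simp
qed



lemma base_good:
  assumes l: "1 \<le> l" and u: "u \<in> Zn l" and z: "(\<lambda>j. 0) \<in> transl u (tsimplex l)"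
    and hyp: "\<forall>s\<in>{1..l}. covmin l s (tsimplex l) = real s / 2"
  shows "good l (transl u (tsimplex l))"
proof -
  let ?K = "transl u (tsimplex l)"
  have uR: "u \<in> Rn l" using u unfolding Zn_def by simp
  have KR: "?K \<subseteq> Rn l" using transl_Rn[OF uR] .
  have st: "star0 ?K" using transl_star[OF z] .
  have cov: "covmin l s ?K = real s / 2" if "1 \<le> s" "s \<le> l" for s
    using hyp that covmin_Sset Sset_transl[OF uR] by simp
  have ne: "Sset l s ?K \<noteq> {}" for s
    using Sset_nonempty[OF l, of s] Sset_transl[OF uR] by auto
  have up: "\<forall>s\<le>l. \<forall>r. real s / 2 < r \<longrightarrow> (\<forall>U. affsub l (l - s) U \<longrightarrow> hits l r ?K U)"
  proof (intro allI impI)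
    fix s r U assume s: "s \<le> l" and r: "real s / 2 < r" and U: "affsub l (l - s) U"
    show "hits l r ?K U"
    proof (cases "s = 0")
      case True
      then show ?thesis using upper0[of l U ?K r] U st unfolding star0_def by simp
    next
      case False
      then have c: "covmin l s ?K = real s / 2" using cov s by simp
      show ?thesis using cov_props(1)[OF st ne c] s r U by simp
    qed
  qed
  have lo: "\<forall>s\<le>l. \<forall>r. r < real s / 2 \<longrightarrow> (\<exists>U. affsub l (l - s) U \<and> (\<forall>\<mu>. 0 \<le> \<mu> \<and> \<mu> \<le> r \<longrightarrow> \<not> hits l \<mu> ?K U))"
  proof (intro allI impI)
    fix s r assume s: "s \<le> l" and r: "r < real s / 2"
    show "\<exists>U. affsub l (l - s) U \<and> (\<forall>\<mu>. 0 \<le> \<mu> \<and> \<mu> \<le> r \<longrightarrow> \<not> hits l \<mu> ?K U)"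
    proof (cases "s = 0")
      case True
      obtain U where "affsub l (l - s) U" using affsub_exists[of "l - s" l] by auto
      then show ?thesis using True r by auto
    next
      case False
      then have c: "covmin l s ?K = real s / 2" using cov s by simp
      show ?thesis using cov_props(2)[OF st ne c] s r by simp
    qed
  qed
  show ?thesis unfolding good_def using KR st up lo by blast
qed

lemma shift_image: "shift off K = (\<lambda>x j. if off \<le> j then x (j - off) else 0) ` K"
  unfolding shift_def by blast

lemma shift_0: "shift 0 K = K"
  unfolding shift_image by simp

lemma shift_shift: "shift a (shift b K) = shift (a + b) K"
proof -
  have "(\<lambda>x j. if a \<le> j then x (j - a) else 0) \<circ> (\<lambda>x j. if b \<le> j then x (j - b) else 0)
      = (\<lambda>x j. if a + b \<le> j then x (j - (a + b)) else 0)"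
    by (auto simp: fun_eq_iff)
  then show ?thesis unfolding shift_image image_comp by (rule arg_cong[where f="\<lambda>z. z ` K"])
qed

lemma shift_dsum: "shift off (dsum K L) = dsum (shift off K) (shift off L)"
proof (rule set_eqI, rule iffI)
  fix q assume "q \<in> shift off (dsum K L)"
  then obtain X where X: "X \<in> dsum K L" "q = (\<lambda>j. if off \<le> j then X (j - off) else 0)"
    unfolding shift_def by blast
  obtain \<tau> x y where xy: "X = (\<lambda>j. \<tau> * x j + (1 - \<tau>) * y j)" "\<tau> \<in> {0..1}" "x \<in> K" "y \<in> L"
    using X(1) unfolding dsum_def by blast
  have "(\<lambda>j. \<tau> * (if off \<le> j then x (j - off) else 0) + (1 - \<tau>) * (if off \<le> j then y (j - off) else 0))
     \<in> dsum (shift off K) (shift off L)"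
    by (rule dsumI[OF xy(2) shiftI[OF xy(3)] shiftI[OF xy(4)]])
  moreover have "q = (\<lambda>j. \<tau> * (if off \<le> j then x (j - off) else 0) + (1 - \<tau>) * (if off \<le> j then y (j - off) else 0))"
    using X(2) xy(1) by (auto simp: fun_eq_iff)
  ultimately show "q \<in> dsum (shift off K) (shift off L)" by simp
next
  fix q assume "q \<in> dsum (shift off K) (shift off L)"
  then obtain \<tau> X Y where XY: "q = (\<lambda>j. \<tau> * X j + (1 - \<tau>) * Y j)" "\<tau> \<in> {0..1}" "X \<in> shift off K" "Y \<in> shift off L"
    unfolding dsum_def by blast
  obtain x where x: "x \<in> K" "X = (\<lambda>j. if off \<le> j then x (j - off) else 0)" using XY(3) unfolding shift_def by blast
  obtain y where y: "y \<in> L" "Y = (\<lambda>j. if off \<le> j then y (j - off) else 0)" using XY(4) unfolding shift_def by blast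
  have "(\<lambda>j. if off \<le> j then (\<lambda>j. \<tau> * x j + (1 - \<tau>) * y j) (j - off) else 0) \<in> shift off (dsum K L)"
    by (rule shiftI[OF dsumI[OF XY(2) x(1) y(1)]])
  moreover have "q = (\<lambda>j. if off \<le> j then (\<lambda>j. \<tau> * x j + (1 - \<tau>) * y j) (j - off) else 0)"
    using XY(1) x(2) y(2) by (auto simp: fun_eq_iff)
  ultimately show "q \<in> shift off (dsum K L)" by simp
qed

lemma tsum_shift: "tsum bs off = shift off (tsum bs 0)"
proof (induction bs arbitrary: off)
  case Nil
  have e1: "tsum [] 0 = {\<lambda>j. 0}" "tsum [] off = {\<lambda>j. 0}" by simp_all
  have e3: "shift off {\<lambda>j. 0} = {\<lambda>j. 0}" unfolding shift_image by simp
  show ?case unfolding e1 e3 ..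
next
  case (Cons p bs)
  note IH = Cons.IH
  obtain l u where p: "p = (l, u)" by fastforce
  show ?case
  proof (cases bs)
    case Nil
    then show ?thesis using p by (simp add: shift_shift)
  next
    case (Cons b bs')
    have L: "tsum (p # bs) off = dsum (shift off (transl u (tsimplex l))) (shift (off + l) (tsum bs 0))"
      using p Cons IH[of "off + l"] by simp
    have R: "shift off (tsum (p # bs) 0) = dsum (shift off (transl u (tsimplex l))) (shift (off + l) (tsum bs 0))"
      using p Cons IH[of l] by (simp add: shift_0 shift_dsum shift_shift)
    show ?thesis by (simp only: L R)
  qed
qed

lemma tsum_good:
  assumes "bs \<noteq> []" "\<forall>p\<in>set bs. good (fst p) (transl (snd p) (tsimplex (fst p)))"
  shows "good (sum_list (map fst bs)) (tsum bs 0)"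
  using assms
proof (induction bs)
  case Nil
  then show ?case by simp
next
  case (Cons p bs)
  note IH = Cons.IH and prems = Cons.prems
  obtain l u where p: "p = (l, u)" by fastforce
  have gp: "good l (transl u (tsimplex l))" using prems p by auto
  show ?case
  proof (cases bs)
    case Nil
    then show ?thesis using p gp by (simp add: shift_0)
  next
    case (Cons b bs')
    have gb: "good (sum_list (map fst bs)) (tsum bs 0)" using IH prems Cons by auto
    have "tsum (p # bs) 0 = dsum (transl u (tsimplex l)) (shift l (tsum bs 0))"
      using p Cons tsum_shift[of bs l] by (simp add: shift_0)
    then show ?thesis using dsum_good[OF gp gb] p by simp
  qed
qed

theorem corollary4p4:
  fixes d :: nat and T :: "(nat \<Rightarrow> real) set"
  assumes "\<forall>n\<le>d. \<forall>s\<in>{1..n}. covmin n s (tsimplex n) = real s / 2"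
    and "terminal_polytope d T"
  shows "\<forall>i\<in>{1..d}. covmin d i T = real i / 2"
proof -
  obtain bs where bs: "bs \<noteq> []" "\<forall>(l, u) \<in> set bs. l \<ge> 1 \<and> u \<in> Zn l \<and> (\<lambda>j. 0) \<in> transl u (tsimplex l)"
    "sum_list (map fst bs) = d" "T = tsum bs 0"
    using assms(2) unfolding terminal_polytope_def by blast
  have "good (fst p) (transl (snd p) (tsimplex (fst p)))" if p: "p \<in> set bs" for p
  proof -
    obtain l u where lu: "p = (l, u)" by fastforce
    have props: "l \<ge> 1" "u \<in> Zn l" "(\<lambda>j. 0) \<in> transl u (tsimplex l)" using bs(2) p lu by auto
    have "l \<in> set (map fst bs)" using p lu by force
    then have "l \<le> d" using bs(3) member_le_sum_list[of l "map fst bs"] by simp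
    then have "\<forall>s\<in>{1..l}. covmin l s (tsimplex l) = real s / 2" using assms(1) by blast
    from base_good[OF props this] show ?thesis using lu by simp
  qed
  then have "good d T" using tsum_good[OF bs(1)] bs(3,4) by auto
  then show ?thesis using good_final by auto
qed

end
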